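(* Let $G$ be a $(2K_2, HVN)$-free graph. Then $\chi(G)\le\omega(G)+3$.
   Context: All graphs are finite, simple and undirected. $2K_2$ is the disjoint union of two edges. $HVN$ is the graph consisting of a $K_4$ together with one further vertex adjacent to exactly two vertices of the $K_4$. A graph is $\mathcal F$-free if it has no induced subgraph isomorphic to a member of $\mathcal F$. $\chi$ is the chromatic number and $\omega$ the clique number. *)

theory Defs
  imports Main
begin

definition graph :: "'a set \<Rightarrow> 'a set set \<Rightarrow> bool" where
  "graph V E \<longleftrightarrow> finite V \<and> (\<forall>e\<in>E. \<exists>u v. e = {u, v} \<and> u \<in> V \<and> v \<in> V \<and> u \<noteq> v)"

definition contains_induced :: "'a set \<Rightarrow> 'a set set \<Rightarrow> 'b set \<Rightarrow> 'b set set \<Rightarrow> bool" where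
  "contains_induced V E VH EH \<longleftrightarrow>
     (\<exists>f. inj_on f VH \<and> f ` VH \<subseteq> V \<and>
          (\<forall>x\<in>VH. \<forall>y\<in>VH. ({f x, f y} \<in> E \<longleftrightarrow> {x, y} \<in> EH)))"

definition twoK2_V :: "nat set" where "twoK2_V = {0, 1, 2, 3}"
definition twoK2_E :: "nat set set" where "twoK2_E = {{0, 1}, {2, 3}}"

definition HVN_V :: "nat set" where "HVN_V = {0, 1, 2, 3, 4}"
definition HVN_E :: "nat set set" where
  "HVN_E = {{0, 1}, {0, 2}, {0, 3}, {1, 2}, {1, 3}, {2, 3}, {4, 0}, {4, 1}}"

definition proper_colouring :: "'a set \<Rightarrow> 'a set set \<Rightarrow> ('a \<Rightarrow> nat) \<Rightarrow> nat \<Rightarrow> bool" where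
  "proper_colouring V E c k \<longleftrightarrow>
     (\<forall>v\<in>V. c v < k) \<and> (\<forall>u\<in>V. \<forall>v\<in>V. {u, v} \<in> E \<longrightarrow> c u \<noteq> c v)"

definition chromatic_number :: "'a set \<Rightarrow> 'a set set \<Rightarrow> nat" where
  "chromatic_number V E = (LEAST k. \<exists>c. proper_colouring V E c k)"

definition clique :: "'a set \<Rightarrow> 'a set set \<Rightarrow> 'a set \<Rightarrow> bool" where
  "clique V E K \<longleftrightarrow> K \<subseteq> V \<and> (\<forall>u\<in>K. \<forall>v\<in>K. u \<noteq> v \<longrightarrow> {u, v} \<in> E)"

definition clique_number :: "'a set \<Rightarrow> 'a set set \<Rightarrow> nat" where
  "clique_number V E = Max {card K | K. clique V E K}"

end

theory Submission
  imports Defs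
begin

lemma edge_props:
  assumes "graph V E" "{x,y} \<in> E"
  shows "x \<in> V \<and> y \<in> V \<and> x \<noteq> y"
proof -
  obtain u v where "{x,y} = {u,v}" "u \<in> V" "v \<in> V" "u \<noteq> v"
    using assms unfolding graph_def by blast
  then show ?thesis by (auto simp: doubleton_eq_iff)
qed

lemma twoK2_ind:
  assumes g: "graph V E" and V: "a\<in>V" "b\<in>V" "c\<in>V" "d\<in>V"
    and e: "{a,b}\<in>E" "{c,d}\<in>E" and n: "{a,c}\<notin>E" "{a,d}\<notin>E" "{b,c}\<notin>E" "{b,d}\<notin>E"
  shows "contains_induced V E twoK2_V twoK2_E"
proof -
  have ne: "a\<noteq>b" "c\<noteq>d" "a\<noteq>c" "a\<noteq>d" "b\<noteq>c" "b\<noteq>d"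
    using edge_props[OF g e(1)] edge_props[OF g e(2)] e n by (auto simp: insert_commute)
  have loop: "\<And>x. {x,x} \<notin> E" using edge_props[OF g] by blast
  define f where "f = (\<lambda>n::nat. if n=0 then a else if n=1 then b else if n=2 then c else d)"
  show ?thesis unfolding contains_induced_def
    apply (rule exI[of _ f])
    using ne loop e n V
    by (auto simp: f_def twoK2_V_def twoK2_E_def inj_on_def doubleton_eq_iff insert_commute)
qed

lemma HVN_ind:
  assumes g: "graph V E" and V: "a\<in>V" "b\<in>V" "c\<in>V" "d\<in>V" "x \<in> V"
    and e: "{a,b}\<in>E" "{a,c}\<in>E" "{a,d}\<in>E" "{b,c}\<in>E" "{b,d}\<in>E" "{c,d}\<in>E"
       "{x,a}\<in>E" "{x,b}\<in>E"
    and n: "{x,c}\<notin>E" "{x,d}\<notin>E"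
  shows "contains_induced V E HVN_V HVN_E"
proof -
  have ne: "a\<noteq>b" "a\<noteq>c" "a\<noteq>d" "b\<noteq>c" "b\<noteq>d" "c\<noteq>d" "x\<noteq>a" "x\<noteq>b" "x\<noteq>c" "x\<noteq>d"
    using edge_props[OF g e(1)] edge_props[OF g e(2)] edge_props[OF g e(3)]
      edge_props[OF g e(4)] edge_props[OF g e(5)] edge_props[OF g e(6)]
      edge_props[OF g e(7)] edge_props[OF g e(8)] e n by (auto simp: insert_commute)
  have loop: "\<And>x. {x,x} \<notin> E" using edge_props[OF g] by blast
  define f where "f = (\<lambda>n::nat. if n=0 then a else if n=1 then b else if n=2 then c else if n=3 then d else x)"
  show ?thesis unfolding contains_induced_def
    apply (rule exI[of _ f])
    using ne loop e n V
    by (auto simp: f_def HVN_V_def HVN_E_def inj_on_def doubleton_eq_iff insert_commute)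
qed

theorem corollary3p8:
  fixes V :: "'a set" and E :: "'a set set"
  assumes "graph V E"
    and "\<not> contains_induced V E twoK2_V twoK2_E"
    and "\<not> contains_induced V E HVN_V HVN_E"
  shows "chromatic_number V E \<le> clique_number V E + 3"
proof -
  note g = assms(1)
  have finV: "finite V" using g unfolding graph_def by blast
  have loop: "\<And>x. {x,x} \<notin> E" using edge_props[OF g] by blast
  define S where "S = {card K | K. clique V E K}"
  have finS: "finite S"
  proof -
    have "S \<subseteq> {0..card V}" unfolding S_def clique_def using finV card_mono by fastforce
    then show ?thesis using finite_subset by blast
  qed
  have "0 \<in> S" unfolding S_def clique_def by (rule CollectI, rule exI[of _ "{}"], simp)
  then have "Max S \<in> S" using finS Max_in by blast
  then have "\<exists>K. clique V E K \<and> card K = Max S" unfolding S_def by (simp only: mem_Collect_eq) metis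
  then obtain K where K: "clique V E K" and cK0: "card K = Max S" by blast
  have cK: "card K = clique_number V E" unfolding clique_number_def cK0 S_def ..
  define w where "w = clique_number V E"
  have maxc: "\<And>K'. clique V E K' \<Longrightarrow> card K' \<le> w"
  proof -
    fix K' assume "clique V E K'"
    then have "card K' \<in> S" unfolding S_def by blast
    moreover have "w = Max S" unfolding w_def clique_number_def S_def ..
    ultimately show "card K' \<le> w" using finS by simp
  qed
  have KV: "K \<subseteq> V" using K unfolding clique_def by blast
  have finK: "finite K" using KV finV finite_subset by blast
  have Kadj: "\<And>u v. u \<in> K \<Longrightarrow> v \<in> K \<Longrightarrow> u \<noteq> v \<Longrightarrow> {u,v} \<in> E"
    using K unfolding clique_def by blast
  obtain gg where bij: "bij_betw gg {0..<w} K" using ex_bij_betw_nat_finite[OF finK] unfolding w_def cK[symmetric] by blast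
  define idx where "idx = inv_into {0..<w} gg"
  have img: "gg ` {0..<w} = K" using bij by (simp add: bij_betw_def)
  have inj: "inj_on gg {0..<w}" using bij by (simp add: bij_betw_def)
  have idx1: "\<And>v. v \<in> K \<Longrightarrow> idx v < w \<and> gg (idx v) = v"
  proof -
    fix v assume v: "v \<in> K"
    have "idx v \<in> {0..<w}" unfolding idx_def using v img inv_into_into by metis
    moreover have "gg (idx v) = v" unfolding idx_def using v img f_inv_into_f by metis
    ultimately show "idx v < w \<and> gg (idx v) = v" by simp
  qed
  have gK: "\<And>i. i < w \<Longrightarrow> gg i \<in> K" using img by auto
  have ginj: "\<And>i j. i < w \<Longrightarrow> j < w \<Longrightarrow> gg i = gg j \<Longrightarrow> i = j"
    using inj unfolding inj_on_def by simp
  have sym: "\<And>x y. {x,y} = {y,x}" by (rule insert_commute)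
  define N where "N = (\<lambda>x. {v\<in>K. {x,v} \<notin> E})"
  have finN: "\<And>x. finite (N x)" unfolding N_def using finK by auto
  have NK: "\<And>x. N x \<subseteq> K" unfolding N_def by blast
  have Nne: "\<And>x. x \<in> V \<Longrightarrow> x \<notin> K \<Longrightarrow> N x \<noteq> {}"
  proof
    fix x assume x: "x \<in> V" "x \<notin> K" "N x = {}"
    have adjx: "\<And>v. v \<in> K \<Longrightarrow> {x,v} \<in> E" using x(3) unfolding N_def by blast
    have "clique V E (insert x K)" unfolding clique_def
    proof (intro conjI ballI impI)
      show "insert x K \<subseteq> V" using x KV by blast
    next
      fix u v assume "u \<in> insert x K" "v \<in> insert x K" "u \<noteq> v"
      then show "{u,v} \<in> E" using adjx Kadj by (auto simp: insert_commute)
    qed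
    then have "card (insert x K) \<le> w" by (rule maxc)
    then show False using x finK cK w_def by simp
  qed
  have A_indep: "\<And>x y z. x \<in> V \<Longrightarrow> y \<in> V \<Longrightarrow> x \<notin> K \<Longrightarrow> y \<notin> K \<Longrightarrow> N x = {z} \<Longrightarrow> N y = {z}
      \<Longrightarrow> {x,y} \<notin> E"
  proof
    fix x y z assume a: "x \<in> V" "y \<in> V" "x \<notin> K" "y \<notin> K" "N x = {z}" "N y = {z}" "{x,y} \<in> E"
    have xy: "x \<noteq> y" using edge_props[OF g a(7)] by blast
    have zK: "z \<in> K" using a(5) NK by blast
    have adjx: "\<And>v. v \<in> K \<Longrightarrow> v \<noteq> z \<Longrightarrow> {x,v} \<in> E" using a(5) unfolding N_def by blast
    have adjy: "\<And>v. v \<in> K \<Longrightarrow> v \<noteq> z \<Longrightarrow> {y,v} \<in> E" using a(6) unfolding N_def by blast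
    have "clique V E (insert x (insert y (K - {z})))" unfolding clique_def
    proof (intro conjI ballI impI)
      show "insert x (insert y (K - {z})) \<subseteq> V" using a KV by blast
    next
      fix u v assume "u \<in> insert x (insert y (K - {z}))" "v \<in> insert x (insert y (K - {z}))" "u \<noteq> v"
      then show "{u,v} \<in> E" using adjx adjy Kadj a(7) by (auto simp: insert_commute)
    qed
    then have "card (insert x (insert y (K - {z}))) \<le> w" by (rule maxc)
    moreover have "card (insert x (insert y (K - {z}))) = card (K - {z}) + 2"
      using a(3,4) xy finK by simp
    moreover have "card (K - {z}) + 1 = w" using zK finK cK w_def
      by (metis card_Suc_Diff1 Suc_eq_plus1)
    ultimately show False by simp
  qed
  have B_key: "\<And>x. x \<in> V \<Longrightarrow> x \<notin> K \<Longrightarrow> card (N x) \<noteq> 1 \<Longrightarrow>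
      (2 \<le> w \<and> {x,gg 0} \<notin> E \<and> {x,gg 1} \<notin> E) \<or> (3 \<le> w \<and> {x,gg 0} \<notin> E \<and> {x,gg 2} \<notin> E)
      \<or> (3 \<le> w \<and> {x,gg 1} \<notin> E \<and> {x,gg 2} \<notin> E)"
  proof -
    fix x assume x: "x \<in> V" "x \<notin> K" "card (N x) \<noteq> 1"
    have c2: "card (N x) \<ge> 2" using x Nne[OF x(1,2)] finN
      by (metis One_nat_def Suc_1 Suc_leI card_gt_0_iff le_neq_implies_less less_Suc_eq_le not_less_eq_eq)
    obtain c where c: "c \<in> N x" using Nne[OF x(1,2)] by blast
    have "card (N x - {c}) \<ge> 1" using c2 c finN by simp
    then obtain d where d: "d \<in> N x - {c}"
      by (metis all_not_in_conv card.empty not_one_le_zero)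
    have cd: "c \<in> K" "d \<in> K" "c \<noteq> d" "{x,c} \<notin> E" "{x,d} \<notin> E" using c d unfolding N_def by auto
    have HV: "\<And>i j. i < w \<Longrightarrow> j < w \<Longrightarrow> i \<noteq> j \<Longrightarrow> {x, gg i} \<in> E \<Longrightarrow> {x, gg j} \<in> E \<Longrightarrow> False"
    proof -
      fix i j assume ij: "i < w" "j < w" "i \<noteq> j" "{x, gg i} \<in> E" "{x, gg j} \<in> E"
      have K4: "gg i \<in> K" "gg j \<in> K" "gg i \<noteq> gg j" using gK ginj ij by auto
      have ne: "gg i \<noteq> c" "gg i \<noteq> d" "gg j \<noteq> c" "gg j \<noteq> d" using ij cd by auto
      have "contains_induced V E HVN_V HVN_E"
        apply (rule HVN_ind[OF g, of "gg i" "gg j" c d x])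
        using K4 cd KV x ne ij Kadj by auto
      then show False using assms(3) by blast
    qed
    show "?thesis x"
    proof (cases "3 \<le> w")
      case True
      then have "0 < w" "1 < w" "2 < w" by auto
      then show ?thesis using HV[of 0 1] HV[of 0 2] HV[of 1 2] True by auto
    next
      case False
      have "card K \<le> 2" using False cK w_def by simp
      moreover have "card (N x) \<le> card K" using card_mono[OF finK NK[of x]] .
      ultimately have "N x = K" using card_subset_eq[OF finK NK[of x]] c2 by linarith
      then have "card K = 2" using c2 \<open>card K \<le> 2\<close> by simp
      then have w2: "w = 2" using cK w_def by simp
      then have "gg 0 \<in> N x" "gg 1 \<in> N x" using gK \<open>N x = K\<close> by auto
      then show ?thesis using w2 unfolding N_def by auto
    qed
  qed
  define cls where "cls = (\<lambda>x. if {x, gg 0} \<notin> E \<and> {x, gg 1} \<notin> E then 0::nat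
      else if {x, gg 0} \<notin> E \<and> {x, gg 2} \<notin> E then 1 else 2)"
  have B_cls: "\<And>x. x \<in> V \<Longrightarrow> x \<notin> K \<Longrightarrow> card (N x) \<noteq> 1 \<Longrightarrow>
     cls x \<le> 2 \<and>
     (cls x = 0 \<longrightarrow> 2 \<le> w \<and> {x,gg 0} \<notin> E \<and> {x,gg 1} \<notin> E) \<and>
     (cls x = 1 \<longrightarrow> 3 \<le> w \<and> {x,gg 0} \<notin> E \<and> {x,gg 2} \<notin> E) \<and>
     (cls x = 2 \<longrightarrow> 3 \<le> w \<and> {x,gg 1} \<notin> E \<and> {x,gg 2} \<notin> E)"
  proof -
    fix x assume x: "x \<in> V" "x \<notin> K" "card (N x) \<noteq> 1"
    show "?thesis x" using B_key[OF x] unfolding cls_def by auto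
  qed
  have Asing: "\<And>x. x \<in> V \<Longrightarrow> x \<notin> K \<Longrightarrow> card (N x) = 1 \<Longrightarrow> N x = {the_elem (N x)}"
    by (metis card_1_singletonE the_elem_eq)
  define c where "c = (\<lambda>x. if x \<in> K then idx x else if card (N x) = 1 then idx (the_elem (N x))
      else w + cls x)"
  have Ael: "\<And>x. x \<in> V \<Longrightarrow> x \<notin> K \<Longrightarrow> card (N x) = 1 \<Longrightarrow>
      the_elem (N x) \<in> K \<and> {x, the_elem (N x)} \<notin> E"
  proof -
    fix x assume x: "x \<in> V" "x \<notin> K" "card (N x) = 1"
    have "the_elem (N x) \<in> N x" using Asing[OF x] by blast
    then show "the_elem (N x) \<in> K \<and> {x, the_elem (N x)} \<notin> E" unfolding N_def by blast
  qed
  have pc: "proper_colouring V E c (w + 3)"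
    unfolding proper_colouring_def
  proof (intro conjI ballI impI)
    fix v assume v: "v \<in> V"
    show "c v < w + 3"
    proof (cases "v \<in> K")
      case True then show ?thesis using idx1 unfolding c_def by fastforce
    next
      case False
      show ?thesis
      proof (cases "card (N v) = 1")
        case True then show ?thesis using idx1 Ael[OF v False True] False unfolding c_def by fastforce
      next
        case F2: False
        then show ?thesis using B_cls[OF v False F2] False unfolding c_def by simp
      qed
    qed
  next
    fix u v assume u: "u \<in> V" and v: "v \<in> V" and e: "{u,v} \<in> E"
    have uv: "u \<noteq> v" using edge_props[OF g e] by blast
    have e': "{v,u} \<in> E" using e by (simp add: insert_commute)
    show "c u \<noteq> c v"
    proof (cases "u \<in> K")
      case uK: True
      show ?thesis
      proof (cases "v \<in> K")
        case True then show ?thesis using uK idx1 uv unfolding c_def by metis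
      next
        case vK: False
        show ?thesis
        proof (cases "card (N v) = 1")
          case True
          have "c v = idx (the_elem (N v))" "c u = idx u" using vK True uK unfolding c_def by auto
          then show ?thesis using Ael[OF v vK True] idx1 uK e' by metis
        next
          case False
          have "c v \<ge> w" "c u < w" using vK False uK idx1 unfolding c_def by auto
          then show ?thesis by simp
        qed
      qed
    next
      case uK: False
      show ?thesis
      proof (cases "v \<in> K")
        case vK: True
        show ?thesis
        proof (cases "card (N u) = 1")
          case True
          have "c u = idx (the_elem (N u))" "c v = idx v" using vK True uK unfolding c_def by auto
          then show ?thesis using Ael[OF u uK True] idx1 vK e by metis
        next
          case False
          have "c u \<ge> w" "c v < w" using vK False uK idx1 unfolding c_def by auto
          then show ?thesis by simp
        qed
      next
        case vK: False
        show ?thesis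
        proof (cases "card (N u) = 1")
          case uA: True
          show ?thesis
          proof (cases "card (N v) = 1")
            case vA: True
            have cu: "c u = idx (the_elem (N u))" "c v = idx (the_elem (N v))"
              using vK uK uA vA unfolding c_def by auto
            show ?thesis
            proof
              assume "c u = c v"
              then have "the_elem (N u) = the_elem (N v)"
                using cu idx1 Ael[OF u uK uA] Ael[OF v vK vA] by metis
              then show False using A_indep[OF u v uK vK Asing[OF u uK uA]] Asing[OF v vK vA] e by metis
            qed
          next
            case vB: False
            have "c u < w" "c v \<ge> w" using vK uK uA vB idx1 Ael[OF u uK uA] unfolding c_def by auto
            then show ?thesis by simp
          qed
        next
          case uB: False
          show ?thesis
          proof (cases "card (N v) = 1")
            case vA: True
            have "c v < w" "c u \<ge> w" using vK uK vA uB idx1 Ael[OF v vK vA] unfolding c_def by auto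
            then show ?thesis by simp
          next
            case vB: False
            have cu: "c u = w + cls u" "c v = w + cls v" using vK uK uB vB unfolding c_def by auto
            have tk: "\<And>i j. i < w \<Longrightarrow> j < w \<Longrightarrow> i \<noteq> j \<Longrightarrow> {u, gg i} \<notin> E \<Longrightarrow> {u, gg j} \<notin> E
                \<Longrightarrow> {v, gg i} \<notin> E \<Longrightarrow> {v, gg j} \<notin> E \<Longrightarrow> False"
            proof -
              fix i j assume ij: "i < w" "j < w" "i \<noteq> j" "{u, gg i} \<notin> E" "{u, gg j} \<notin> E"
                "{v, gg i} \<notin> E" "{v, gg j} \<notin> E"
              have "gg i \<in> K" "gg j \<in> K" "gg i \<noteq> gg j" using gK ginj ij by auto
              then have "contains_induced V E twoK2_V twoK2_E"
                using twoK2_ind[OF g u v _ _ e, of "gg i" "gg j"] KV Kadj ij by auto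
              then show False using assms(2) by blast
            qed
            show ?thesis
            proof
              assume "c u = c v"
              then have eq: "cls u = cls v" using cu by simp
              have bu: "cls u \<le> 2" using B_cls[OF u uK uB] by blast
              then consider "cls u = 0" | "cls u = 1" | "cls u = 2" by linarith
              then show False
              proof cases
                case 1 then show False using B_cls[OF u uK uB] B_cls[OF v vK vB] eq tk[of 0 1] by auto
              next
                case 2 then show False using B_cls[OF u uK uB] B_cls[OF v vK vB] eq tk[of 0 2] by auto
              next
                case 3 then show False using B_cls[OF u uK uB] B_cls[OF v vK vB] eq tk[of 1 2] by auto
              qed
            qed
          qed
        qed
      qed
    qed
  qed
  have "chromatic_number V E \<le> w + 3" unfolding chromatic_number_def
    by (rule Least_le) (rule exI[of _ c], rule pc)
  then show ?thesis unfolding w_def .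
qed

end
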